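(* For every $m\ge 1$ and every $m$-by-$2m$ disjoint matrix $M$, there are pairwise incomparable strings $\sigma_0,\tau_0,\dots,\sigma_{m-1},\tau_{m-1}$ such that $\sigma_i$ and $\tau_i$ are entries of the row $M(i)$ for every $i<m$.
   Context: Strings are finite binary strings, and $\preceq$ is the prefix relation. Two strings are incomparable if neither is a prefix of the other. An $m$-by-$n$ matrix $M$ is an array of strings $\sigma_{i,j}\in 2^{<\omega}$ for $i<m$ and $j<n$. Its $i$th row $M(i)$ is the tuple $(\sigma_{i,0},\dots,\sigma_{i,n-1})$. The matrix $M$ is disjoint if, for each $i<m$, the strings $\sigma_{i,0},\dots,\sigma_{i,n-1}$ are pairwise incomparable. *)

theory Defs
  imports Main "HOL-Library.Sublist"
begin

definition incomparable :: "bool list \<Rightarrow> bool list \<Rightarrow> bool" where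
  "incomparable \<sigma> \<tau> \<longleftrightarrow> \<not> prefix \<sigma> \<tau> \<and> \<not> prefix \<tau> \<sigma>"

text \<open>An m-by-n matrix is a function M with M i j the entry in row i, column j
(only entries with i < m and j < n matter).\<close>

definition disjoint_matrix :: "nat \<Rightarrow> nat \<Rightarrow> (nat \<Rightarrow> nat \<Rightarrow> bool list) \<Rightarrow> bool" where
  "disjoint_matrix m n M \<longleftrightarrow>
     (\<forall>i<m. \<forall>j<n. \<forall>k<n. j \<noteq> k \<longrightarrow> incomparable (M i j) (M i k))"

end

theory Submission
  imports Defs
begin

definition antich :: "bool list set \<Rightarrow> bool" where
  "antich A \<longleftrightarrow> (\<forall>x\<in>A. \<forall>y\<in>A. x \<noteq> y \<longrightarrow> incomparable x y)"

lemma incomp_sym: "incomparable x y \<Longrightarrow> incomparable y x"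
  by (auto simp: incomparable_def)

lemma incomp_irrefl: "\<not> incomparable x x"
  by (auto simp: incomparable_def)

lemma key:
  "\<And>d R. (\<forall>i<(m::nat). d i > 0 \<longrightarrow> antich (R i) \<and> finite (R i) \<and> card (R i) \<ge> sum d {..<m})
   \<Longrightarrow> sum d {..<m} = D \<Longrightarrow>
   \<exists>S. (\<forall>i<m. S i \<subseteq> R i \<and> finite (S i) \<and> card (S i) = d i) \<and>
       (\<forall>i<m. \<forall>k<m. \<forall>x\<in>S i. \<forall>y\<in>S k. (i \<noteq> k \<or> x \<noteq> y) \<longrightarrow> incomparable x y)"
proof (induction D)
  case 0
  have "\<forall>i<m. d i = 0"
  proof (intro allI impI)
    fix i assume "i < m"
    then have "d i \<le> sum d {..<m}" by (intro member_le_sum) simp_all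
    then show "d i = 0" using 0 by simp
  qed
  then show ?case by (intro exI[of _ "\<lambda>_. {}"]) auto
next
  case (Suc D)
  define J where "J = {i. i < m \<and> d i > 0}"
  define C where "C = (\<Union>i\<in>J. R i)"
  have "J \<noteq> {}"
  proof
    assume "J = {}"
    then have "\<forall>i<m. d i = 0" unfolding J_def by auto
    then have "sum d {..<m} = 0" by simp
    with Suc.prems show False by simp
  qed
  then obtain i0 where i0: "i0 \<in> J" by auto
  have finC: "finite C" unfolding C_def J_def using Suc.prems(1) by (intro finite_UN_I) auto
  have "card (R i0) \<ge> 1" using i0 Suc.prems unfolding J_def by auto
  then have "R i0 \<noteq> {}" by auto
  then have "C \<noteq> {}" using i0 unfolding C_def by auto
  define L where "L = Max (length ` C)"
  have "L \<in> length ` C" unfolding L_def using finC \<open>C \<noteq> {}\<close> by auto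
  then obtain x where xC: "x \<in> C" and xl: "length x = L" by auto
  have maxl: "\<And>y. y \<in> C \<Longrightarrow> length y \<le> length x"
    using finC xl unfolding L_def by auto
  from xC obtain r where rJ: "r \<in> J" and xr: "x \<in> R r" unfolding C_def by auto
  define d' where "d' = d(r := d r - 1)"
  define R' where "R' = (\<lambda>i. {y \<in> R i. incomparable x y})"
  have rm: "r < m" and dr: "d r > 0" using rJ unfolding J_def by auto
  have sumd: "sum d {..<m} = Suc (sum d' {..<m})"
  proof -
    have "sum d {..<m} = d r + sum d ({..<m} - {r})"
      using rm by (simp add: sum.remove)
    moreover have "sum d' {..<m} = d' r + sum d' ({..<m} - {r})"
      using rm by (simp add: sum.remove)
    moreover have "sum d' ({..<m} - {r}) = sum d ({..<m} - {r})"
      unfolding d'_def by (intro sum.cong) auto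
    ultimately show ?thesis using dr unfolding d'_def by simp
  qed
  have hyp: "\<forall>i<m. d' i > 0 \<longrightarrow> antich (R' i) \<and> finite (R' i) \<and> card (R' i) \<ge> sum d' {..<m}"
  proof (intro allI impI)
    fix i assume im: "i < m" and di': "d' i > 0"
    then have di: "d i > 0" unfolding d'_def by (auto split: if_splits)
    have iJ: "i \<in> J" using im di unfolding J_def by auto
    have A: "antich (R i)" and F: "finite (R i)" and Cd: "card (R i) \<ge> sum d {..<m}"
      using Suc.prems(1) im di by auto
    have A': "antich (R' i)" using A unfolding antich_def R'_def by auto
    have F': "finite (R' i)" using F unfolding R'_def by auto
    define B where "B = {y \<in> R i. prefix y x}"
    have sub: "R i \<subseteq> R' i \<union> B"
    proof
      fix y assume yR: "y \<in> R i"
      show "y \<in> R' i \<union> B"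
      proof (cases "incomparable x y")
        case True then show ?thesis using yR unfolding R'_def by auto
      next
        case False
        have "y \<in> C" using yR iJ unfolding C_def by auto
        then have "length y \<le> length x" by (rule maxl)
        with False have "prefix y x"
          unfolding incomparable_def
          by (metis prefix_length_le prefix_order.eq_iff le_antisym prefix_length_prefix)
        then show ?thesis using yR unfolding B_def by auto
      qed
    qed
    have FB: "finite B" using F unfolding B_def by auto
    have "card B \<le> Suc 0"
    proof (subst card_le_Suc0_iff_eq[OF FB], intro ballI)
      fix a b assume "a \<in> B" "b \<in> B"
      then have "a \<in> R i" "b \<in> R i" "prefix a x" "prefix b x" unfolding B_def by auto
      then show "a = b" using A unfolding antich_def incomparable_def
        by (metis prefix_same_cases)
    qed
    have "card (R i) \<le> card (R' i \<union> B)" using sub F' FB by (intro card_mono) auto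
    also have "\<dots> \<le> card (R' i) + card B" by (rule card_Un_le)
    finally have "card (R i) \<le> card (R' i) + 1" using \<open>card B \<le> Suc 0\<close> by simp
    with Cd sumd have "card (R' i) \<ge> sum d' {..<m}" by simp
    with A' F' show "antich (R' i) \<and> finite (R' i) \<and> card (R' i) \<ge> sum d' {..<m}" by simp
  qed
  have "sum d' {..<m} = D" using sumd Suc.prems(2) by simp
  from Suc.IH[OF hyp this] obtain S' where
    S1: "\<forall>i<m. S' i \<subseteq> R' i \<and> finite (S' i) \<and> card (S' i) = d' i" and
    S2: "\<forall>i<m. \<forall>k<m. \<forall>x\<in>S' i. \<forall>y\<in>S' k. (i \<noteq> k \<or> x \<noteq> y) \<longrightarrow> incomparable x y"
    by blast
  have xinc: "\<And>k y. k < m \<Longrightarrow> y \<in> S' k \<Longrightarrow> incomparable x y"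
    using S1 unfolding R'_def by blast
  have xnot: "x \<notin> S' r" using xinc[OF rm] incomp_irrefl by blast
  define S where "S = S'(r := insert x (S' r))"
  show ?case
  proof (intro exI[of _ S] conjI allI impI ballI)
    fix i assume im: "i < m"
    show "S i \<subseteq> R i" using S1 im xr unfolding S_def R'_def by auto
    show "finite (S i)" using S1 im unfolding S_def by auto
    show "card (S i) = d i" using S1 im xnot dr unfolding S_def d'_def by auto
  next
    fix i k a b assume im: "i < m" and km: "k < m" and a: "a \<in> S i" and b: "b \<in> S k"
      and ne: "i \<noteq> k \<or> a \<noteq> b"
    show "incomparable a b"
    proof (cases "a = x \<and> i = r")
      case True
      show ?thesis
      proof (cases "b = x \<and> k = r")
        case True with \<open>a = x \<and> i = r\<close> ne show ?thesis by auto
      next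
        case False
        then have "b \<in> S' k" using b unfolding S_def by (auto split: if_splits)
        then show ?thesis using xinc km True by auto
      qed
    next
      case False
      then have a': "a \<in> S' i" using a unfolding S_def by (auto split: if_splits)
      show ?thesis
      proof (cases "b = x \<and> k = r")
        case True
        then show ?thesis using xinc[OF im a'] incomp_sym by auto
      next
        case False
        then have "b \<in> S' k" using b unfolding S_def by (auto split: if_splits)
        then show ?thesis using S2 im km a' ne by blast
      qed
    qed
  qed
qed

theorem mainTheorem3:
  fixes m :: nat and M :: "nat \<Rightarrow> nat \<Rightarrow> bool list"
  assumes "m \<ge> 1"
    and "disjoint_matrix m (2 * m) M"
  shows "\<exists>\<sigma> \<tau> :: nat \<Rightarrow> bool list.
           (\<forall>i<m. (\<exists>j<2 * m. \<sigma> i = M i j) \<and> (\<exists>j<2 * m. \<tau> i = M i j)) \<and>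
           (\<forall>i<m. incomparable (\<sigma> i) (\<tau> i)) \<and>
           (\<forall>i<m. \<forall>k<m. i \<noteq> k \<longrightarrow>
              incomparable (\<sigma> i) (\<sigma> k) \<and> incomparable (\<sigma> i) (\<tau> k) \<and>
              incomparable (\<tau> i) (\<tau> k))"
proof -
  define R where "R = (\<lambda>i. M i ` {..<2*m})"
  define d where "d = (\<lambda>i::nat. 2::nat)"
  have sd: "sum d {..<m} = 2 * m" unfolding d_def by simp
  have hyp: "\<forall>i<m. d i > 0 \<longrightarrow> antich (R i) \<and> finite (R i) \<and> card (R i) \<ge> sum d {..<m}"
  proof (intro allI impI)
    fix i assume im: "i < m"
    have inj: "inj_on (M i) {..<2*m}"
      using assms(2) im incomp_irrefl unfolding disjoint_matrix_def inj_on_def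
      by (metis lessThan_iff)
    have "antich (R i)" using assms(2) im unfolding antich_def R_def disjoint_matrix_def
      by auto
    moreover have "card (R i) = 2 * m" unfolding R_def using card_image[OF inj] by simp
    ultimately show "antich (R i) \<and> finite (R i) \<and> card (R i) \<ge> sum d {..<m}"
      unfolding R_def using sd by simp
  qed
  from key[OF hyp refl] obtain S where
    S1: "\<forall>i<m. S i \<subseteq> R i \<and> finite (S i) \<and> card (S i) = d i" and
    S2: "\<forall>i<m. \<forall>k<m. \<forall>x\<in>S i. \<forall>y\<in>S k. (i \<noteq> k \<or> x \<noteq> y) \<longrightarrow> incomparable x y"
    by blast
  have "\<forall>i. \<exists>p. i < m \<longrightarrow> S i = {fst p, snd p} \<and> fst p \<noteq> snd p"
  proof
    fix i show "\<exists>p. i < m \<longrightarrow> S i = {fst p, snd p} \<and> fst p \<noteq> snd p"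
    proof (cases "i < m")
      case True
      then have "card (S i) = 2" using S1 unfolding d_def by auto
      then obtain a b where "S i = {a, b}" "a \<noteq> b" by (auto simp: card_2_iff)
      then show ?thesis by (intro exI[of _ "(a,b)"]) auto
    qed auto
  qed
  then obtain f where f: "\<And>i. i < m \<Longrightarrow> S i = {fst (f i), snd (f i)} \<and> fst (f i) \<noteq> snd (f i)"
    by metis
  let ?s = "\<lambda>i. fst (f i)" and ?t = "\<lambda>i. snd (f i)"
  have c1: "\<forall>i<m. (\<exists>j<2 * m. ?s i = M i j) \<and> (\<exists>j<2 * m. ?t i = M i j)"
  proof (intro allI impI)
    fix i assume im: "i < m"
    have "fst (f i) \<in> R i" "snd (f i) \<in> R i" using S1 f[OF im] im by auto
    then show "(\<exists>j<2 * m. ?s i = M i j) \<and> (\<exists>j<2 * m. ?t i = M i j)"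
      unfolding R_def by auto
  qed
  have c2: "\<forall>i<m. incomparable (?s i) (?t i)"
  proof (intro allI impI)
    fix i assume im: "i < m"
    show "incomparable (?s i) (?t i)" using S2 f[OF im] im by auto
  qed
  have c3: "\<forall>i<m. \<forall>k<m. i \<noteq> k \<longrightarrow>
              incomparable (?s i) (?s k) \<and> incomparable (?s i) (?t k) \<and>
              incomparable (?t i) (?t k)"
  proof (intro allI impI)
    fix i k assume im: "i < m" and km: "k < m" and ne: "i \<noteq> k"
    show "incomparable (?s i) (?s k) \<and> incomparable (?s i) (?t k) \<and> incomparable (?t i) (?t k)"
      using S2 f[OF im] f[OF km] im km ne by auto
  qed
  show ?thesis by (rule exI[of _ ?s], rule exI[of _ ?t], intro conjI c1 c2 c3)
qed

end
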